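(* Let $f=z^4+f_2z^2+f_3z+f_4$ with $f_j\in\mathbb{R}[x,y]$ homogeneous of degree $j$ ($j=2,3,4$), and assume $\gcd(f_3,4f_4-f_2^2)=1$. Then the number of orthogonal equivalence classes of representations of $f$ as a sum of three squares of quadratic forms in $\mathbb{R}[x,y,z]$ equals the number of binary quadratic forms $\xi\in\mathbb{R}[x,y]$ for which there exists a binary cubic form $\eta\in\mathbb{R}[x,y]$ with $\eta^2+f_3^2=(f_2-\xi)(4f_4-\xi^2)$, $f_2-\xi$ psd and $4f_4-\xi^2$ psd.
   Context: psd means taking only nonnegative values on real points. Two representations $f=\sum_{i=1}^3p_i^2=\sum_{i=1}^3p_i'^2$ with quadratic forms $p_i,p_i'$ are orthogonally equivalent if there is $S=(s_{ij})\in O_3(\mathbb{R})$ with $p'_j=\sum_i s_{ij}p_i$ for $j=1,2,3$. *)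

theory Defs
  imports "HOL-Analysis.Analysis" "HOL-Computational_Algebra.Computational_Algebra"
    "HOL-Library.Equipollence" "HOL-Computational_Algebra.Field_as_Ring"
begin

(* Bivariate polynomials R[x,y] are modelled as real poly poly (outer variable x,
   coefficients in R[y]); trivariate polynomials R[x,y,z] as real poly poly poly
   (outer variable z, coefficients in R[x,y]). *)

definition hom2 :: "nat \<Rightarrow> real poly poly \<Rightarrow> bool" where
  "hom2 d p \<longleftrightarrow> (\<forall>i k. coeff (coeff p i) k \<noteq> 0 \<longrightarrow> i + k = d)"

definition hom3 :: "nat \<Rightarrow> real poly poly poly \<Rightarrow> bool" where
  "hom3 d p \<longleftrightarrow> (\<forall>i j k. coeff (coeff (coeff p i) j) k \<noteq> 0 \<longrightarrow> i + j + k = d)"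

definition eval2 :: "real poly poly \<Rightarrow> real \<Rightarrow> real \<Rightarrow> real" where
  "eval2 p x y = poly (poly p [:x:]) y"

definition psd2 :: "real poly poly \<Rightarrow> bool" where
  "psd2 p \<longleftrightarrow> (\<forall>x y. 0 \<le> eval2 p x y)"

definition quartic :: "real poly poly \<Rightarrow> real poly poly \<Rightarrow> real poly poly \<Rightarrow> real poly poly poly" where
  "quartic f2 f3 f4 = [:f4, f3, f2, 0, 1:]"

definition sos3_reps :: "real poly poly poly \<Rightarrow> (real poly poly poly ^ 3) set" where
  "sos3_reps f = {p. (\<forall>i. hom3 2 (p $ i)) \<and> f = (\<Sum>i\<in>UNIV. (p $ i)\<^sup>2)}"

definition orth_equiv :: "(real poly poly poly ^ 3) rel" where
  "orth_equiv = {(p, q). \<exists>S :: real^3^3. orthogonal_matrix S \<and>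
      (\<forall>j. q $ j = (\<Sum>i\<in>UNIV. smult [:[:S $ i $ j:]:] (p $ i)))}"

end

theory Submission
  imports Defs
begin


definition cst :: "real \<Rightarrow> real poly poly" where "cst a = [:[:a:]:]"
definition L :: "real \<Rightarrow> real \<Rightarrow> real poly poly" where "L u v = [:[:0,v:],[:u:]:]"
definition Q :: "real \<Rightarrow> real \<Rightarrow> real \<Rightarrow> real poly poly" where "Q a b c = [:[:0,0,c:],[:0,b:],[:a:]:]"
definition C3 :: "real \<Rightarrow> real \<Rightarrow> real \<Rightarrow> real \<Rightarrow> real poly poly" where
  "C3 m0 m1 m2 m3 = [:[:0,0,0,m3:],[:0,0,m2:],[:0,m1:],[:m0:]:]"
definition C4 :: "real \<Rightarrow> real \<Rightarrow> real \<Rightarrow> real \<Rightarrow> real \<Rightarrow> real poly poly" where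
  "C4 p0 p1 p2 p3 p4 = [:[:0,0,0,0,p4:],[:0,0,0,p3:],[:0,0,p2:],[:0,p1:],[:p0:]:]"

lemma hom2_zero: "hom2 d p \<Longrightarrow> i + k \<noteq> d \<Longrightarrow> coeff (coeff p i) k = 0"
  by (auto simp: hom2_def)

lemma hom2_0: "hom2 0 p \<Longrightarrow> p = cst (coeff (coeff p 0) 0)"
  apply (rule poly_eqI, rule poly_eqI)
  by (auto simp: hom2_zero cst_def coeff_pCons eval_nat_numeral split: nat.splits)

lemma hom2_1: "hom2 1 p \<Longrightarrow> p = L (coeff (coeff p 1) 0) (coeff (coeff p 0) 1)"
  apply (rule poly_eqI, rule poly_eqI)
  by (auto simp: hom2_zero L_def coeff_pCons eval_nat_numeral split: nat.splits)

lemma hom2_2: "hom2 2 p \<Longrightarrow> p = Q (coeff (coeff p 2) 0) (coeff (coeff p 1) 1) (coeff (coeff p 0) 2)"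
  apply (rule poly_eqI, rule poly_eqI)
  by (auto simp: hom2_zero Q_def coeff_pCons eval_nat_numeral split: nat.splits)

lemma hom2_3: "hom2 3 p \<Longrightarrow> p = C3 (coeff (coeff p 3) 0) (coeff (coeff p 2) 1) (coeff (coeff p 1) 2) (coeff (coeff p 0) 3)"
  apply (rule poly_eqI, rule poly_eqI)
  by (auto simp: hom2_zero C3_def coeff_pCons eval_nat_numeral split: nat.splits)

lemma hom2_4: "hom2 4 p \<Longrightarrow> p = C4 (coeff (coeff p 4) 0) (coeff (coeff p 3) 1) (coeff (coeff p 2) 2) (coeff (coeff p 1) 3) (coeff (coeff p 0) 4)"
  apply (rule poly_eqI, rule poly_eqI)
  by (auto simp: hom2_zero C4_def coeff_pCons eval_nat_numeral split: nat.splits)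

lemma hom2_cst: "hom2 0 (cst a)" by (auto simp: hom2_def cst_def coeff_pCons split: nat.splits)
lemma hom2_L: "hom2 1 (L u v)" by (auto simp: hom2_def L_def coeff_pCons split: nat.splits)
lemma hom2_Q: "hom2 2 (Q a b c)" by (auto simp: hom2_def Q_def coeff_pCons split: nat.splits)
lemma hom2_C3: "hom2 3 (C3 a b c d)" by (auto simp: hom2_def C3_def coeff_pCons split: nat.splits)
lemma hom2_C4: "hom2 4 (C4 a b c d e)" by (auto simp: hom2_def C4_def coeff_pCons split: nat.splits)

lemma hom3_2:
  assumes "hom3 2 P"
  shows "P = [:coeff P 0, coeff P 1, coeff P 2:]" "hom2 2 (coeff P 0)" "hom2 1 (coeff P 1)" "hom2 0 (coeff P 2)"
proof -
  have z: "i + j + k \<noteq> 2 \<Longrightarrow> coeff (coeff (coeff P i) j) k = 0" for i j k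
    using assms by (auto simp: hom3_def)
  show "P = [:coeff P 0, coeff P 1, coeff P 2:]"
    apply (rule poly_eqI, rule poly_eqI, rule poly_eqI)
    by (auto simp: z coeff_pCons eval_nat_numeral split: nat.splits)
  show "hom2 2 (coeff P 0)" unfolding hom2_def
    using z[of 0] by (metis add_0)
  show "hom2 1 (coeff P 1)" unfolding hom2_def
  proof (intro allI impI)
    fix j k assume "coeff (coeff (coeff P 1) j) k \<noteq> 0"
    then show "j + k = 1" using z[of 1 j k] by (cases "1 + j + k = 2") auto
  qed
  show "hom2 0 (coeff P 2)" unfolding hom2_def
  proof (intro allI impI)
    fix j k assume "coeff (coeff (coeff P 2) j) k \<noteq> 0"
    then show "j + k = 0" using z[of 2 j k] by (cases "2 + j + k = 2") auto
  qed
qed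

lemma hom3_2I:
  assumes "hom2 2 A" "hom2 1 B" "hom2 0 C"
  shows "hom3 2 [:A, B, C:]"
  using assms unfolding hom3_def hom2_def
  by (auto simp: coeff_pCons split: nat.splits)

lemma sq3: "[:A, B, C:]^2 = [:A^2, 2*A*B, B^2 + 2*A*C, 2*B*C, C^2:]" for A B C :: "real poly poly"
  by (simp add: power2_eq_square algebra_simps)

lemma rep_eqs:
  fixes p :: "real poly poly poly ^ 3"
  assumes "p \<in> sos3_reps (quartic f2 f3 f4)"
  shows "(coeff (p$1) 2)^2 + (coeff (p$2) 2)^2 + (coeff (p$3) 2)^2 = 1"
    "coeff (p$1) 1 * coeff (p$1) 2 + coeff (p$2) 1 * coeff (p$2) 2 + coeff (p$3) 1 * coeff (p$3) 2 = 0"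
    "(coeff (p$1) 1)^2 + 2 * coeff (p$1) 0 * coeff (p$1) 2 + ((coeff (p$2) 1)^2 + 2 * coeff (p$2) 0 * coeff (p$2) 2)
      + ((coeff (p$3) 1)^2 + 2 * coeff (p$3) 0 * coeff (p$3) 2) = f2"
    "2 * coeff (p$1) 0 * coeff (p$1) 1 + 2 * coeff (p$2) 0 * coeff (p$2) 1 + 2 * coeff (p$3) 0 * coeff (p$3) 1 = f3"
    "(coeff (p$1) 0)^2 + (coeff (p$2) 0)^2 + (coeff (p$3) 0)^2 = f4"
proof -
  have h: "hom3 2 (p$i)" for i using assms by (auto simp: sos3_reps_def)
  have e: "p$i = [:coeff (p$i) 0, coeff (p$i) 1, coeff (p$i) 2:]" for i using hom3_2(1)[OF h] .
  have "quartic f2 f3 f4 = (p$1)^2 + (p$2)^2 + (p$3)^2"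
    using assms by (simp add: sos3_reps_def sum_3)
  also have "\<dots> = [:coeff (p$1) 0, coeff (p$1) 1, coeff (p$1) 2:]^2 + [:coeff (p$2) 0, coeff (p$2) 1, coeff (p$2) 2:]^2
     + [:coeff (p$3) 0, coeff (p$3) 1, coeff (p$3) 2:]^2"
    using e[of 1] e[of 2] e[of 3] by simp
  finally have eq: "quartic f2 f3 f4 = \<dots>" .
  show "(coeff (p$1) 2)^2 + (coeff (p$2) 2)^2 + (coeff (p$3) 2)^2 = 1"
    "coeff (p$1) 1 * coeff (p$1) 2 + coeff (p$2) 1 * coeff (p$2) 2 + coeff (p$3) 1 * coeff (p$3) 2 = 0"
    "(coeff (p$1) 1)^2 + 2 * coeff (p$1) 0 * coeff (p$1) 2 + ((coeff (p$2) 1)^2 + 2 * coeff (p$2) 0 * coeff (p$2) 2)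
      + ((coeff (p$3) 1)^2 + 2 * coeff (p$3) 0 * coeff (p$3) 2) = f2"
    "2 * coeff (p$1) 0 * coeff (p$1) 1 + 2 * coeff (p$2) 0 * coeff (p$2) 1 + 2 * coeff (p$3) 0 * coeff (p$3) 1 = f3"
    "(coeff (p$1) 0)^2 + (coeff (p$2) 0)^2 + (coeff (p$3) 0)^2 = f4"
    using eq unfolding sq3 quartic_def by (simp_all add: algebra_simps)
qed



definition K :: "real \<Rightarrow> real poly poly poly" where "K a = [:cst a:]"

lemma cst_mult: "cst (a * b) = cst a * cst b" by (simp add: cst_def)
lemma cst_add: "cst (a + b) = cst a + cst b" by (simp add: cst_def)
lemma cst_0[simp]: "cst 0 = 0" by (simp add: cst_def)
lemma cst_1[simp]: "cst 1 = 1" by (simp add: cst_def one_pCons)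
lemma cst_sum: "cst (sum g A) = (\<Sum>i\<in>A. cst (g i))"
  by (induction A rule: infinite_finite_induct) (auto simp: cst_add)
lemma K_mult: "K (a * b) = K a * K b" by (simp add: K_def cst_mult)
lemma K_add: "K (a + b) = K a + K b" by (simp add: K_def cst_add)
lemma K_0[simp]: "K 0 = 0" by (simp add: K_def)
lemma K_1[simp]: "K 1 = 1" by (simp add: K_def one_pCons)
lemma K_sum: "K (sum g A) = (\<Sum>i\<in>A. K (g i))"
  by (induction A rule: infinite_finite_induct) (auto simp: K_add)
lemma smult_K: "smult (cst a) P = K a * P" by (simp add: K_def)
lemma smult_K': "smult [:[:a:]:] P = K a * P" by (simp add: K_def cst_def)
lemma coeff_K: "coeff (K a * P) n = cst a * coeff P n" by (simp add: K_def)
lemma coeff3_K: "coeff (coeff (coeff (K a * P) i) j) k = a * coeff (coeff (coeff P i) j) k"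
  by (simp add: K_def cst_def)

lemma orth_bilin:
  fixes S :: "real^'n^'n" and X Y :: "'n \<Rightarrow> 'a::comm_ring_1" and f :: "real \<Rightarrow> 'a"
  assumes S: "orthogonal_matrix S" and fmult: "\<And>x y. f (x*y) = f x * f y"
    and fsum: "\<And>g (A::'n set). f (sum g A) = (\<Sum>i\<in>A. f (g i))" and f1: "f 1 = 1" and f0: "f 0 = 0"
  shows "(\<Sum>j\<in>UNIV. (\<Sum>i\<in>UNIV. f (S$i$j) * X i) * (\<Sum>l\<in>UNIV. f (S$l$j) * Y l)) = (\<Sum>i\<in>UNIV. X i * Y i)"
proof -
  have "(\<Sum>j\<in>UNIV. (\<Sum>i\<in>UNIV. f (S$i$j) * X i) * (\<Sum>l\<in>UNIV. f (S$l$j) * Y l))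
      = (\<Sum>j\<in>UNIV. \<Sum>i\<in>UNIV. \<Sum>l\<in>UNIV. f (S$i$j) * f (S$l$j) * (X i * Y l))"
    by (simp add: sum_product mult_ac)
  also have "\<dots> = (\<Sum>i\<in>UNIV. \<Sum>j\<in>UNIV. \<Sum>l\<in>UNIV. f (S$i$j) * f (S$l$j) * (X i * Y l))"
    by (rule sum.swap)
  also have "\<dots> = (\<Sum>i\<in>UNIV. \<Sum>l\<in>UNIV. \<Sum>j\<in>UNIV. f (S$i$j) * f (S$l$j) * (X i * Y l))"
    by (rule sum.cong[OF refl], rule sum.swap)
  also have "\<dots> = (\<Sum>i\<in>UNIV. \<Sum>l\<in>UNIV. f ((S ** transpose S)$i$l) * (X i * Y l))"
    by (simp add: matrix_matrix_mult_def transpose_def fsum fmult sum_distrib_right)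
  also have "\<dots> = (\<Sum>i\<in>UNIV. \<Sum>l\<in>UNIV. (if i = l then X i * Y l else 0))"
  proof -
    have fS: "f ((S ** transpose S)$i$l) * (X i * Y l) = (if i = l then X i * Y l else 0)" for i l
      using S by (simp add: orthogonal_matrix_def mat_def f1 f0)
    show ?thesis by (simp only: fS)
  qed
  also have "\<dots> = (\<Sum>i\<in>UNIV. X i * Y i)" by simp
  finally show ?thesis .
qed

definition lin :: "real^3^3 \<Rightarrow> real poly poly poly ^ 3 \<Rightarrow> real poly poly poly ^ 3" where
  "lin S p = (\<chi> j. \<Sum>i\<in>UNIV. K (S$i$j) * p$i)"

lemma orth_equiv_iff: "(p, q) \<in> orth_equiv \<longleftrightarrow> (\<exists>S. orthogonal_matrix S \<and> q = lin S p)"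
  by (simp add: orth_equiv_def lin_def vec_eq_iff smult_K')

lemma lin_comp: "lin T (lin S p) = lin (S ** T) p"
proof -
  have "(\<Sum>j\<in>UNIV. K (T$j$k) * (\<Sum>i\<in>UNIV. K (S$i$j) * p$i)) = (\<Sum>i\<in>UNIV. K ((S ** T)$i$k) * p$i)" for k
  proof -
    have "(\<Sum>j\<in>UNIV. K (T$j$k) * (\<Sum>i\<in>UNIV. K (S$i$j) * p$i)) = (\<Sum>j\<in>UNIV. \<Sum>i\<in>UNIV. K (S$i$j * T$j$k) * p$i)"
      by (simp add: sum_distrib_left K_mult mult_ac)
    also have "\<dots> = (\<Sum>i\<in>UNIV. \<Sum>j\<in>UNIV. K (S$i$j * T$j$k) * p$i)" by (rule sum.swap)
    also have "\<dots> = (\<Sum>i\<in>UNIV. K ((S ** T)$i$k) * p$i)"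
      by (simp add: matrix_matrix_mult_def K_sum sum_distrib_right)
    finally show ?thesis .
  qed
  then show ?thesis by (simp add: lin_def vec_eq_iff)
qed

lemma lin_id: "lin (mat 1) p = p"
proof -
  have e: "K (mat 1 $ i $ j) * p$i = (if i = j then p$i else 0)" for i j by (simp add: mat_def)
  show ?thesis by (simp add: lin_def vec_eq_iff e)
qed

lemma orth_refl: "(p, p) \<in> orth_equiv"
  unfolding orth_equiv_iff by (metis lin_id orthogonal_matrix_id)

lemma orth_sym: "(p, q) \<in> orth_equiv \<Longrightarrow> (q, p) \<in> orth_equiv"
  unfolding orth_equiv_iff
  by (metis lin_comp lin_id orthogonal_matrix_def orthogonal_matrix_transpose)

lemma orth_trans: "(p, q) \<in> orth_equiv \<Longrightarrow> (q, r) \<in> orth_equiv \<Longrightarrow> (p, r) \<in> orth_equiv"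
  unfolding orth_equiv_iff by (metis lin_comp orthogonal_matrix_mul)

lemma hom3_add: "hom3 d P \<Longrightarrow> hom3 d R \<Longrightarrow> hom3 d (P + R)"
  unfolding hom3_def by (metis add.right_neutral coeff_add)
lemma hom3_K: "hom3 d P \<Longrightarrow> hom3 d (K a * P)"
  by (auto simp: hom3_def coeff3_K)
lemma hom3_0: "hom3 d 0" by (simp add: hom3_def)
lemma hom3_sum: "(\<And>i. i \<in> A \<Longrightarrow> hom3 d (g i)) \<Longrightarrow> hom3 d (sum g A)"
  by (induction A rule: infinite_finite_induct) (auto simp: hom3_0 hom3_add)

lemma rep_lin:
  assumes "p \<in> sos3_reps f" "orthogonal_matrix S"
  shows "lin S p \<in> sos3_reps f"
proof -
  have "(\<Sum>j\<in>UNIV. (lin S p $ j)^2) = (\<Sum>j\<in>UNIV. (\<Sum>i\<in>UNIV. K (S$i$j) * p$i) * (\<Sum>l\<in>UNIV. K (S$l$j) * p$l))"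
    by (simp add: lin_def power2_eq_square)
  also have "\<dots> = (\<Sum>i\<in>UNIV. p$i * p$i)"
    by (rule orth_bilin[OF assms(2)]) (auto simp: K_mult K_sum)
  finally have "(\<Sum>j\<in>UNIV. (lin S p $ j)^2) = f" using assms(1) by (simp add: sos3_reps_def power2_eq_square)
  moreover have "hom3 2 (lin S p $ j)" for j
    using assms(1) by (auto simp: lin_def sos3_reps_def intro!: hom3_sum hom3_K)
  ultimately show ?thesis by (simp add: sos3_reps_def)
qed

definition xi :: "real poly poly poly ^ 3 \<Rightarrow> real poly poly" where
  "xi p = 2 * (\<Sum>i\<in>UNIV. coeff (p$i) 2 * coeff (p$i) 0)"

lemma coeff_lin: "coeff (lin S p $ j) n = (\<Sum>i\<in>UNIV. cst (S$i$j) * coeff (p$i) n)"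
  by (simp add: lin_def coeff_sum coeff_K)

lemma xi_lin: "orthogonal_matrix S \<Longrightarrow> xi (lin S p) = xi p"
  unfolding xi_def coeff_lin
  by (subst orth_bilin) (auto simp: cst_mult cst_sum)

lemma xi_orth: "(p, q) \<in> orth_equiv \<Longrightarrow> xi q = xi p"
  unfolding orth_equiv_iff using xi_lin by auto

lemma rep_orth: "p \<in> sos3_reps f \<Longrightarrow> (p, q) \<in> orth_equiv \<Longrightarrow> q \<in> sos3_reps f"
  unfolding orth_equiv_iff using rep_lin by auto



lemma cst_inj: "cst a = cst b \<Longrightarrow> a = b" by (simp add: cst_def)

lemma normalize:
  fixes p :: "real poly poly poly ^ 3"
  assumes p: "p \<in> sos3_reps (quartic f2 f3 f4)"
  shows "\<exists>q. q \<in> sos3_reps (quartic f2 f3 f4) \<and> (p, q) \<in> orth_equiv \<and>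
     coeff (q$1) 2 = 1 \<and> coeff (q$2) 2 = 0 \<and> coeff (q$3) 2 = 0"
proof -
  define a :: "real^3" where "a = (\<chi> i. coeff (coeff (coeff (p$i) 2) 0) 0)"
  have h: "hom3 2 (p$i)" for i using p by (auto simp: sos3_reps_def)
  have ca: "coeff (p$i) 2 = cst (a$i)" for i
    using hom2_0[OF hom3_2(4)[OF h]] by (simp add: a_def)
  have "cst ((a$1)^2 + (a$2)^2 + (a$3)^2) = cst 1"
    using rep_eqs(1)[OF p] by (simp add: ca cst_add cst_mult power2_eq_square)
  then have "(a$1)^2 + (a$2)^2 + (a$3)^2 = 1" by (rule cst_inj)
  then have "norm a = 1"
    by (simp add: norm_eq_1 inner_vec_def sum_3 power2_eq_square)
  then obtain A where A: "orthogonal_matrix A" "A *v (axis 1 1) = a"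
    using orthogonal_matrix_exists_basis by metis
  have ta: "transpose A *v a = axis 1 1"
    using A by (metis matrix_vector_mul_assoc matrix_vector_mul_lid orthogonal_matrix_def)
  define q where "q = lin A p"
  have c2: "coeff (q$j) 2 = cst (axis 1 1 $ j)" for j
  proof -
    have "coeff (q$j) 2 = cst (\<Sum>i\<in>UNIV. A$i$j * a$i)"
      by (simp add: q_def coeff_lin ca cst_sum cst_mult)
    also have "(\<Sum>i\<in>UNIV. A$i$j * a$i) = (transpose A *v a)$j"
      by (simp add: matrix_vector_mult_def transpose_def)
    finally show ?thesis using ta by simp
  qed
  show ?thesis
  proof (intro exI conjI)
    show "q \<in> sos3_reps (quartic f2 f3 f4)" using rep_lin[OF p A(1)] by (simp add: q_def)
    show "(p, q) \<in> orth_equiv" using A(1) by (auto simp: orth_equiv_iff q_def)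
    show "coeff (q$1) 2 = 1" "coeff (q$2) 2 = 0" "coeff (q$3) 2 = 0"
      by (simp_all add: c2 axis_def)
  qed
qed

definition normal :: "real poly poly poly ^ 3 \<Rightarrow> bool" where
  "normal q \<longleftrightarrow> coeff (q$1) 2 = 1 \<and> coeff (q$2) 2 = 0 \<and> coeff (q$3) 2 = 0"

lemma norm_struct:
  fixes q :: "real poly poly poly ^ 3"
  assumes q: "q \<in> sos3_reps (quartic f2 f3 f4)" and n: "normal q"
  shows "q$1 = [:coeff (q$1) 0, 0, 1:]" "q$2 = [:coeff (q$2) 0, coeff (q$2) 1:]"
    "q$3 = [:coeff (q$3) 0, coeff (q$3) 1:]"
    "hom2 2 (coeff (q$1) 0)" "hom2 2 (coeff (q$2) 0)" "hom2 2 (coeff (q$3) 0)"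
    "hom2 1 (coeff (q$2) 1)" "hom2 1 (coeff (q$3) 1)"
    "2 * coeff (q$1) 0 + (coeff (q$2) 1)^2 + (coeff (q$3) 1)^2 = f2"
    "2 * coeff (q$2) 0 * coeff (q$2) 1 + 2 * coeff (q$3) 0 * coeff (q$3) 1 = f3"
    "(coeff (q$1) 0)^2 + (coeff (q$2) 0)^2 + (coeff (q$3) 0)^2 = f4"
    "xi q = 2 * coeff (q$1) 0"
proof -
  have h: "hom3 2 (q$i)" for i using q by (auto simp: sos3_reps_def)
  have n1: "coeff (q$1) 2 = 1" "coeff (q$2) 2 = 0" "coeff (q$3) 2 = 0" using n by (auto simp: normal_def)
  have z: "coeff (q$1) 1 = 0" using rep_eqs(2)[OF q] n1 by simp
  show "q$1 = [:coeff (q$1) 0, 0, 1:]" "q$2 = [:coeff (q$2) 0, coeff (q$2) 1:]"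
    "q$3 = [:coeff (q$3) 0, coeff (q$3) 1:]"
    using hom3_2(1)[OF h[of 1]] hom3_2(1)[OF h[of 2]] hom3_2(1)[OF h[of 3]] n1 z by auto
  show "hom2 2 (coeff (q$1) 0)" "hom2 2 (coeff (q$2) 0)" "hom2 2 (coeff (q$3) 0)"
    "hom2 1 (coeff (q$2) 1)" "hom2 1 (coeff (q$3) 1)"
    using hom3_2 h by auto
  show "2 * coeff (q$1) 0 + (coeff (q$2) 1)^2 + (coeff (q$3) 1)^2 = f2"
    using rep_eqs(3)[OF q] n1 z by (simp add: algebra_simps power2_eq_square)
  show "2 * coeff (q$2) 0 * coeff (q$2) 1 + 2 * coeff (q$3) 0 * coeff (q$3) 1 = f3"
    using rep_eqs(4)[OF q] n1 z by (simp add: algebra_simps)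
  show "(coeff (q$1) 0)^2 + (coeff (q$2) 0)^2 + (coeff (q$3) 0)^2 = f4"
    using rep_eqs(5)[OF q] .
  show "xi q = 2 * coeff (q$1) 0" using n1 by (simp add: xi_def sum_3)
qed



lemma L_mult_L: "L u v * L u1 v1 = Q (u * u1) (u * v1 + v * u1) (v * v1)"
  by (simp add: L_def Q_def algebra_simps)
lemma L_mult_Q: "L u v * Q a b c = C3 (u * a) (u * b + v * a) (u * c + v * b) (v * c)"
  by (simp add: L_def Q_def C3_def algebra_simps)
lemma Q_mult_Q: "Q a b c * Q a1 b1 c1 = C4 (a * a1) (a * b1 + b * a1) (a * c1 + b * b1 + c * a1) (b * c1 + c * b1) (c * c1)"
  by (simp add: Q_def C4_def algebra_simps)
lemma cst_numeral: "cst (numeral n) = numeral n"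
  by (simp add: cst_def numeral_poly)

lemma hom2_add: "hom2 d p \<Longrightarrow> hom2 d q \<Longrightarrow> hom2 d (p + q)"
  unfolding hom2_def by (metis add.right_neutral coeff_add)
lemma hom2_diff: "hom2 d p \<Longrightarrow> hom2 d q \<Longrightarrow> hom2 d (p - q)"
  unfolding hom2_def by (metis diff_zero coeff_diff)
lemma hom2_cmult: "hom2 d p \<Longrightarrow> hom2 d (cst a * p)"
  unfolding hom2_def by (simp add: cst_def)
lemma hom2_num: "hom2 d p \<Longrightarrow> hom2 d (numeral n * p)"
  using hom2_cmult[of d p "numeral n"] by (simp add: cst_numeral)
lemma hom2_m11: "hom2 1 p \<Longrightarrow> hom2 1 q \<Longrightarrow> hom2 2 (p * q)"
  by (metis hom2_1 L_mult_L hom2_Q)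
lemma hom2_m12: "hom2 1 p \<Longrightarrow> hom2 2 q \<Longrightarrow> hom2 3 (p * q)"
  by (metis hom2_1 hom2_2 L_mult_Q hom2_C3)
lemma hom2_m22: "hom2 2 p \<Longrightarrow> hom2 2 q \<Longrightarrow> hom2 4 (p * q)"
  by (metis hom2_2 Q_mult_Q hom2_C4)
lemma hom2_sq1: "hom2 1 p \<Longrightarrow> hom2 2 (p^2)" by (simp add: power2_eq_square hom2_m11)
lemma hom2_sq2: "hom2 2 p \<Longrightarrow> hom2 4 (p^2)" by (simp add: power2_eq_square hom2_m22)

lemma eval2_mult[simp]: "eval2 (p * q) x y = eval2 p x y * eval2 q x y" by (simp add: eval2_def)
lemma eval2_add[simp]: "eval2 (p + q) x y = eval2 p x y + eval2 q x y" by (simp add: eval2_def)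
lemma eval2_diff[simp]: "eval2 (p - q) x y = eval2 p x y - eval2 q x y" by (simp add: eval2_def)
lemma eval2_pow[simp]: "eval2 (p ^ n) x y = eval2 p x y ^ n" by (simp add: eval2_def)
lemma eval2_num[simp]: "eval2 (numeral n) x y = numeral n" by (simp add: eval2_def)
lemma eval2_0[simp]: "eval2 0 x y = 0" by (simp add: eval2_def)

definition Tset :: "real poly poly \<Rightarrow> real poly poly \<Rightarrow> real poly poly \<Rightarrow> real poly poly set" where
  "Tset f2 f3 f4 = {\<xi>. hom2 2 \<xi> \<and> (\<exists>\<eta>. hom2 3 \<eta> \<and>
         \<eta>\<^sup>2 + f3\<^sup>2 = (f2 - \<xi>) * (4 * f4 - \<xi>\<^sup>2) \<and>
         psd2 (f2 - \<xi>) \<and> psd2 (4 * f4 - \<xi>\<^sup>2))}"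

lemma norm_in_T:
  fixes q :: "real poly poly poly ^ 3"
  assumes q: "q \<in> sos3_reps (quartic f2 f3 f4)" and n: "normal q"
  shows "xi q \<in> Tset f2 f3 f4"
proof -
  define c1 c2 c3 b2 b3 where "c1 = coeff (q$1) 0" "c2 = coeff (q$2) 0" "c3 = coeff (q$3) 0"
    "b2 = coeff (q$2) 1" "b3 = coeff (q$3) 1"
  note s = norm_struct[OF q n, folded c1_c2_c3_b2_b3_def]
  have e2: "f2 - xi q = b2^2 + b3^2" using s by (simp add: algebra_simps)
  have e4: "4 * f4 - (xi q)^2 = 4 * (c2^2 + c3^2)"
    using s by (simp add: algebra_simps power2_eq_square)
  define \<eta> where "\<eta> = 2 * (b2 * c3 - b3 * c2)"
  have "hom2 3 \<eta>" unfolding \<eta>_def using s by (intro hom2_num hom2_diff hom2_m12) auto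
  moreover have "\<eta>^2 + f3^2 = (f2 - xi q) * (4 * f4 - (xi q)^2)"
    unfolding e2 e4 s(10)[symmetric] \<eta>_def by (simp add: algebra_simps power2_eq_square)
  moreover have "psd2 (f2 - xi q)" unfolding e2 psd2_def by simp
  moreover have "psd2 (4 * f4 - (xi q)^2)" unfolding e4 psd2_def by simp
  moreover have "hom2 2 (xi q)" using s by (simp add: hom2_num)
  ultimately show ?thesis unfolding Tset_def by blast
qed



lemma L_comb: "cst a * L u v + cst b * L u1 v1 = L (a * u + b * u1) (a * v + b * v1)"
  by (simp add: cst_def L_def algebra_simps)
lemma Q_add: "Q a b c + Q a1 b1 c1 = Q (a + a1) (b + b1) (c + c1)"
  by (simp add: Q_def)
lemma Q_eq: "Q a b c = Q a1 b1 c1 \<longleftrightarrow> a = a1 \<and> b = b1 \<and> c = c1"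
  by (auto simp: Q_def)
lemma L_x: "L 1 0 = [:0, 1:]" by (simp add: L_def one_pCons)
lemma L_y: "L 0 1 = [:[:0, 1:]:]" by (simp add: L_def)

lemma xy_dvd:
  fixes g m :: "real poly poly"
  assumes g: "g \<noteq> 0" and dx: "g dvd L 1 0 * m" and dy: "g dvd L 0 1 * m"
  shows "g dvd m"
proof -
  have lx: "L 1 0 * m = pCons 0 m" by (simp add: L_def) (metis one_pCons smult_1_left)
  have ly: "L 0 1 * m = smult [:0, 1:] m" by (simp add: L_def)
  obtain Q1 where Q1: "pCons 0 m = g * Q1" using dx unfolding lx by (auto elim: dvdE)
  obtain Q2 where Q2: "smult [:0, 1:] m = g * Q2" using dy unfolding ly by (auto elim: dvdE)
  have "g * smult [:0, 1:] Q1 = smult [:0, 1:] (pCons 0 m)" by (simp add: Q1)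
  also have "\<dots> = pCons 0 (g * Q2)" by (simp add: Q2[symmetric])
  also have "\<dots> = g * pCons 0 Q2" by simp
  finally have e: "smult [:0, 1:] Q1 = pCons 0 Q2" using g mult_left_cancel by blast
  have "coeff (smult [:0, 1:] Q1) 0 = coeff (pCons 0 Q2) 0" using e by (rule arg_cong)
  then have "[:0, 1:] * coeff Q1 0 = 0" by (simp only: coeff_smult coeff_pCons_0)
  then have c0: "coeff Q1 0 = 0" by simp
  obtain a R where QR: "Q1 = pCons a R" by (cases Q1)
  with c0 have "Q1 = pCons 0 R" by simp
  with Q1 have "pCons 0 m = pCons 0 (g * R)" by simp
  then have "m = g * R" by simp
  then show ?thesis by simp
qed


lemma rot2:
  fixes u2 u3 v2 v3 s2 s3 t2 t3 :: real
  assumes e1: "u2^2 + u3^2 = s2^2 + s3^2" and e2: "v2^2 + v3^2 = t2^2 + t3^2"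
    and e3: "u2 * v2 + u3 * v3 = s2 * t2 + s3 * t3" and e4: "u2 * v3 - u3 * v2 = s2 * t3 - s3 * t2"
  shows "\<exists>cs sn. cs^2 + sn^2 = 1 \<and> s2 = cs * u2 - sn * u3 \<and> s3 = sn * u2 + cs * u3
          \<and> t2 = cs * v2 - sn * v3 \<and> t3 = sn * v2 + cs * v3"
proof (cases "u2^2 + u3^2 = 0")
  case False
  define N where "N = u2^2 + u3^2"
  have N: "N \<noteq> 0" using False by (simp add: N_def)
  define cs where "cs = (u2 * s2 + u3 * s3) / N"
  define sn where "sn = (u2 * s3 - u3 * s2) / N"
  have "cs^2 + sn^2 = ((u2 * s2 + u3 * s3)^2 + (u2 * s3 - u3 * s2)^2) / N^2"
    by (simp only: cs_def sn_def power_divide add_divide_distrib[symmetric])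
  also have "(u2 * s2 + u3 * s3)^2 + (u2 * s3 - u3 * s2)^2 = N * (s2^2 + s3^2)"
    by (simp add: N_def power2_eq_square algebra_simps)
  also have "\<dots> = N^2" using e1 by (simp add: N_def power2_eq_square)
  finally have 1: "cs^2 + sn^2 = 1" using N by simp
  have 2: "s2 = cs * u2 - sn * u3"
  proof -
    have "N * s2 = (u2 * s2 + u3 * s3) * u2 - (u2 * s3 - u3 * s2) * u3"
      by (simp add: N_def power2_eq_square algebra_simps)
    then show ?thesis using N by (simp add: cs_def sn_def field_simps)
  qed
  have 3: "s3 = sn * u2 + cs * u3"
  proof -
    have "N * s3 = (u2 * s3 - u3 * s2) * u2 + (u2 * s2 + u3 * s3) * u3"
      by (simp add: N_def power2_eq_square algebra_simps)
    then show ?thesis using N by (simp add: cs_def sn_def field_simps)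
  qed
  have 4: "t2 = cs * v2 - sn * v3"
  proof -
    have "(u2 * s2 + u3 * s3) * v2 - (u2 * s3 - u3 * s2) * v3 = s2 * (u2 * v2 + u3 * v3) - s3 * (u2 * v3 - u3 * v2)"
      by (simp add: algebra_simps)
    also have "\<dots> = s2 * (s2 * t2 + s3 * t3) - s3 * (s2 * t3 - s3 * t2)" using e3 e4 by simp
    also have "\<dots> = (s2^2 + s3^2) * t2" by (simp add: power2_eq_square algebra_simps)
    also have "\<dots> = N * t2" using e1 by (simp add: N_def)
    finally show ?thesis using N by (simp add: cs_def sn_def field_simps)
  qed
  have 5: "t3 = sn * v2 + cs * v3"
  proof -
    have "(u2 * s3 - u3 * s2) * v2 + (u2 * s2 + u3 * s3) * v3 = s3 * (u2 * v2 + u3 * v3) + s2 * (u2 * v3 - u3 * v2)"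
      by (simp add: algebra_simps)
    also have "\<dots> = s3 * (s2 * t2 + s3 * t3) + s2 * (s2 * t3 - s3 * t2)" using e3 e4 by simp
    also have "\<dots> = (s2^2 + s3^2) * t3" by (simp add: power2_eq_square algebra_simps)
    also have "\<dots> = N * t3" using e1 by (simp add: N_def)
    finally show ?thesis using N by (simp add: cs_def sn_def field_simps)
  qed
  show ?thesis using 1 2 3 4 5 by blast
next
  case True
  then have u: "u2 = 0" "u3 = 0" by (simp_all add: sum_power2_eq_zero_iff)
  then have "s2^2 + s3^2 = 0" using e1 by simp
  then have s: "s2 = 0" "s3 = 0" by (simp_all add: sum_power2_eq_zero_iff)
  show ?thesis
  proof (cases "v2^2 + v3^2 = 0")
    case True
    then have "v2 = 0" "v3 = 0" by (simp_all add: sum_power2_eq_zero_iff)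
    moreover from True e2 have "t2^2 + t3^2 = 0" by simp
    then have "t2 = 0" "t3 = 0" by (simp_all add: sum_power2_eq_zero_iff)
    ultimately show ?thesis using u s by (intro exI[of _ 1] exI[of _ 0]) simp
  next
    case False
    define N where "N = v2^2 + v3^2"
    have N: "N \<noteq> 0" using False by (simp add: N_def)
    define cs where "cs = (v2 * t2 + v3 * t3) / N"
    define sn where "sn = (v2 * t3 - v3 * t2) / N"
    have "cs^2 + sn^2 = ((v2 * t2 + v3 * t3)^2 + (v2 * t3 - v3 * t2)^2) / N^2"
      by (simp only: cs_def sn_def power_divide add_divide_distrib[symmetric])
    also have "(v2 * t2 + v3 * t3)^2 + (v2 * t3 - v3 * t2)^2 = N * (t2^2 + t3^2)"
      by (simp add: N_def power2_eq_square algebra_simps)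
    also have "\<dots> = N^2" using e2 by (simp add: N_def power2_eq_square)
    finally have 1: "cs^2 + sn^2 = 1" using N by simp
    have 4: "t2 = cs * v2 - sn * v3"
    proof -
      have "N * t2 = (v2 * t2 + v3 * t3) * v2 - (v2 * t3 - v3 * t2) * v3"
        by (simp add: N_def power2_eq_square algebra_simps)
      then show ?thesis using N by (simp add: cs_def sn_def field_simps)
    qed
    have 5: "t3 = sn * v2 + cs * v3"
    proof -
      have "N * t3 = (v2 * t3 - v3 * t2) * v2 + (v2 * t2 + v3 * t3) * v3"
        by (simp add: N_def power2_eq_square algebra_simps)
      then show ?thesis using N by (simp add: cs_def sn_def field_simps)
    qed
    show ?thesis using 1 4 5 u s by auto
  qed
qed



lemma cst_minus: "cst (- a) = - cst a" by (simp add: cst_def)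
lemma cst_L: "cst a * L u v = L (a * u) (a * v)" by (simp add: cst_def L_def)
lemma half_dvd: fixes X g Y :: "real poly poly" shows "2 * X = g * Y \<Longrightarrow> g dvd X"
proof -
  assume h: "2 * X = g * Y"
  have "X = cst (1/2 * 2) * X" by simp
  also have "\<dots> = cst (1/2) * (2 * X)" by (simp only: cst_mult cst_numeral mult.assoc)
  also have "\<dots> = g * (cst (1/2) * Y)" by (simp only: h mult.left_commute)
  finally show ?thesis by (rule dvdI)
qed
lemma Q_not_unit: "a \<noteq> 0 \<Longrightarrow> \<not> is_unit (Q a b c)"
  by (auto simp: is_unit_poly_iff Q_def)

lemma inj_core_pos:
  fixes b2 b3 d2 d3 c2 c3 e2 e3 :: "real poly poly"
  assumes hb: "b2 = L u2 v2" "b3 = L u3 v3" "d2 = L s2 t2" "d3 = L s3 t3"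
    and E1: "b2^2 + b3^2 = d2^2 + d3^2"
    and E2: "b2 * c2 + b3 * c3 = d2 * e2 + d3 * e3"
    and E3: "c2^2 + c3^2 = e2^2 + e3^2"
    and Nq: "b2 * c3 - b3 * c2 = d2 * e3 - d3 * e2"
    and G: "\<And>dv. dv dvd b2^2 + b3^2 \<Longrightarrow> dv dvd b2 * c2 + b3 * c3 \<Longrightarrow> dv dvd c2^2 + c3^2 \<Longrightarrow> is_unit dv"
    and nz: "b2^2 + b3^2 \<noteq> 0"
  shows "\<exists>r11 r12 r21 r22. r11^2 + r21^2 = 1 \<and> r12^2 + r22^2 = 1 \<and> r11 * r12 + r21 * r22 = 0 \<and>
     d2 = cst r11 * b2 + cst r21 * b3 \<and> d3 = cst r12 * b2 + cst r22 * b3 \<and>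
     e2 = cst r11 * c2 + cst r21 * c3 \<and> e3 = cst r12 * c2 + cst r22 * c3"
proof -
  define g m n where "g = b2^2 + b3^2" "m = b2 * c2 + b3 * c3" "n = b2 * c3 - b3 * c2"
  have gnz: "g \<noteq> 0" using nz by (simp add: g_m_n_def)
  have gc2: "g * c2 = b2 * m - b3 * n" by (simp add: g_m_n_def power2_eq_square algebra_simps)
  have gc3: "g * c3 = b3 * m + b2 * n" by (simp add: g_m_n_def power2_eq_square algebra_simps)
  have g': "g = d2^2 + d3^2" "m = d2 * e2 + d3 * e3" "n = d2 * e3 - d3 * e2"
    using E1 E2 Nq by (simp_all add: g_m_n_def)
  have ge2: "g * e2 = d2 * m - d3 * n" unfolding g' by (simp add: power2_eq_square algebra_simps)
  have ge3: "g * e3 = d3 * m + d2 * n" unfolding g' by (simp add: power2_eq_square algebra_simps)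
  have "Q (u2 * u2 + u3 * u3) (u2 * v2 + v2 * u2 + (u3 * v3 + v3 * u3)) (v2 * v2 + v3 * v3)
      = Q (s2 * s2 + s3 * s3) (s2 * t2 + t2 * s2 + (s3 * t3 + t3 * s3)) (t2 * t2 + t3 * t3)"
    using E1 unfolding hb power2_eq_square L_mult_L Q_add .
  then have gr1: "u2^2 + u3^2 = s2^2 + s3^2" and gr2: "v2^2 + v3^2 = t2^2 + t3^2"
    and gr3: "u2 * v2 + u3 * v3 = s2 * t2 + s3 * t3"
    unfolding Q_eq by (simp_all add: power2_eq_square algebra_simps)
  define D D' where "D = u2 * v3 - u3 * v2" "D' = s2 * t3 - s3 * t2"
  have "D^2 = (u2^2 + u3^2) * (v2^2 + v3^2) - (u2 * v2 + u3 * v3)^2"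
    by (simp add: D_D'_def power2_eq_square algebra_simps)
  also have "\<dots> = (s2^2 + s3^2) * (t2^2 + t3^2) - (s2 * t2 + s3 * t3)^2" using gr1 gr2 gr3 by simp
  also have "\<dots> = D'^2" by (simp add: D_D'_def power2_eq_square algebra_simps)
  finally have "D'^2 = D^2" ..
  then have DD: "D' = D \<or> D' = - D" by (simp add: power2_eq_iff)
  show ?thesis
  proof (cases "D' = D")
    case True
    then obtain cs sn where r: "cs^2 + sn^2 = 1" "s2 = cs * u2 - sn * u3" "s3 = sn * u2 + cs * u3"
      "t2 = cs * v2 - sn * v3" "t3 = sn * v2 + cs * v3"
      using rot2[OF gr1 gr2 gr3] by (auto simp: D_D'_def)
    have d2: "d2 = cst cs * b2 + cst (- sn) * b3" unfolding hb L_comb r by simp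
    have d3: "d3 = cst sn * b2 + cst cs * b3" unfolding hb L_comb r by simp
    have "g * e2 = g * (cst cs * c2 + cst (- sn) * c3)"
      unfolding ge2 distrib_left mult.left_commute[of g] gc2 gc3 d2 d3 cst_minus
      by (simp add: algebra_simps)
    then have e2: "e2 = cst cs * c2 + cst (- sn) * c3" using gnz by simp
    have "g * e3 = g * (cst sn * c2 + cst cs * c3)"
      unfolding ge3 distrib_left mult.left_commute[of g] gc2 gc3 d2 d3 cst_minus
      by (simp add: algebra_simps)
    then have e3: "e3 = cst sn * c2 + cst cs * c3" using gnz by simp
    show ?thesis
      by (rule exI[of _ cs], rule exI[of _ sn], rule exI[of _ "- sn"], rule exI[of _ cs])
        (use r(1) d2 d3 e2 e3 in \<open>auto simp: algebra_simps\<close>)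
  next
    case False
    with DD have DD': "D' = - D" by simp
    have Dnz: "D' \<noteq> 0" using False DD' by auto
    have gr1': "u2^2 + u3^2 = s2^2 + (- s3)^2" using gr1 by simp
    have gr2': "v2^2 + v3^2 = t2^2 + (- t3)^2" using gr2 by simp
    have gr3': "u2 * v2 + u3 * v3 = s2 * t2 + (- s3) * (- t3)" using gr3 by simp
    have gr4: "u2 * v3 - u3 * v2 = s2 * (- t3) - (- s3) * t2" using DD' by (simp add: D_D'_def)
    obtain cs sn where r: "cs^2 + sn^2 = 1" "s2 = cs * u2 - sn * u3" "- s3 = sn * u2 + cs * u3"
      "t2 = cs * v2 - sn * v3" "- t3 = sn * v2 + cs * v3"
      using rot2[OF gr1' gr2' gr3' gr4] by auto
    have r': "s3 = (- sn) * u2 + (- cs) * u3" "t3 = (- sn) * v2 + (- cs) * v3"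
      using r(3,5) by linarith+
    have d2: "d2 = cst cs * b2 + cst (- sn) * b3" unfolding hb L_comb r(2,4) by simp
    have d3: "d3 = cst (- sn) * b2 + cst (- cs) * b3" unfolding hb L_comb r' by simp
    define h2 h3 where "h2 = cst cs * c2 - cst sn * c3" "h3 = cst sn * c2 + cst cs * c3"
    have gh2: "g * h2 = d2 * m + d3 * n"
      unfolding h2_h3_def right_diff_distrib mult.left_commute[of g] gc2 gc3 d2 d3 cst_minus
      by (simp add: algebra_simps)
    have gh3: "g * h3 = - d3 * m + d2 * n"
      unfolding h2_h3_def distrib_left mult.left_commute[of g] gc2 gc3 d2 d3 cst_minus
      by (simp add: algebra_simps)
    have dm2: "g dvd d2 * m" by (rule half_dvd[of _ _ "h2 + e2"]) (simp add: distrib_left gh2 ge2)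
    have dn3: "g dvd d3 * n" by (rule half_dvd[of _ _ "h2 - e2"]) (simp add: right_diff_distrib gh2 ge2)
    have dm3: "g dvd d3 * m" by (rule half_dvd[of _ _ "e3 - h3"]) (simp add: right_diff_distrib gh3 ge3)
    have dn2: "g dvd d2 * n" by (rule half_dvd[of _ _ "e3 + h3"]) (simp add: distrib_left gh3 ge3)
    have lx0: "cst t3 * d2 + cst (- t2) * d3 = L D' 0" unfolding hb L_comb by (simp add: D_D'_def algebra_simps)
    have ly0: "cst (- s3) * d2 + cst s2 * d3 = L 0 D'" unfolding hb L_comb by (simp add: D_D'_def algebra_simps)
    have lx: "L 1 0 = cst (1 / D') * (cst t3 * d2 + cst (- t2) * d3)"
      unfolding lx0 cst_L using Dnz by simp
    have ly: "L 0 1 = cst (1 / D') * (cst (- s3) * d2 + cst s2 * d3)"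
      unfolding ly0 cst_L using Dnz by simp
    have dvx: "g dvd L 1 0 * w" if "g dvd d2 * w" "g dvd d3 * w" for w
    proof -
      have "L 1 0 * w = cst (1 / D') * (cst t3 * (d2 * w) + cst (- t2) * (d3 * w))"
        unfolding lx by (simp add: algebra_simps)
      then show ?thesis using that by simp
    qed
    have dvy: "g dvd L 0 1 * w" if "g dvd d2 * w" "g dvd d3 * w" for w
    proof -
      have "L 0 1 * w = cst (1 / D') * (cst (- s3) * (d2 * w) + cst s2 * (d3 * w))"
        unfolding ly by (simp add: algebra_simps)
      then show ?thesis using that by simp
    qed
    have gm: "g dvd m" using xy_dvd[OF gnz dvx[OF dm2 dm3] dvy[OF dm2 dm3]] .
    have gn: "g dvd n" using xy_dvd[OF gnz dvx[OF dn2 dn3] dvy[OF dn2 dn3]] .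
    obtain M where M: "m = g * M" using gm by (auto elim: dvdE)
    obtain N where N: "n = g * N" using gn by (auto elim: dvdE)
    have "g * (c2^2 + c3^2) = m^2 + n^2" by (simp add: g_m_n_def power2_eq_square algebra_simps)
    also have "\<dots> = g * (g * (M^2 + N^2))" by (simp add: M N power2_eq_square algebra_simps)
    finally have "c2^2 + c3^2 = g * (M^2 + N^2)" using gnz by simp
    then have gk: "g dvd c2^2 + c3^2" by simp
    have "is_unit g" using G[OF _ _ gk] gm by (simp add: g_m_n_def)
    moreover have "g = Q (u2 * u2 + u3 * u3) (u2 * v2 + v2 * u2 + (u3 * v3 + v3 * u3)) (v2 * v2 + v3 * v3)"
      unfolding g_m_n_def hb power2_eq_square L_mult_L Q_add ..
    moreover have "u2 * u2 + u3 * u3 \<noteq> 0"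
    proof
      assume "u2 * u2 + u3 * u3 = 0"
      then have "u2 = 0" "u3 = 0" by (simp_all add: sum_squares_eq_zero_iff)
      then show False using Dnz DD' by (simp add: D_D'_def)
    qed
    ultimately show ?thesis using Q_not_unit by metis
  qed
qed



lemma inj_core:
  fixes b2 b3 d2 d3 c2 c3 e2 e3 :: "real poly poly"
  assumes hb: "b2 = L u2 v2" "b3 = L u3 v3" "d2 = L s2 t2" "d3 = L s3 t3"
    and E1: "b2^2 + b3^2 = d2^2 + d3^2"
    and E2: "b2 * c2 + b3 * c3 = d2 * e2 + d3 * e3"
    and E3: "c2^2 + c3^2 = e2^2 + e3^2"
    and G: "\<And>dv. dv dvd b2^2 + b3^2 \<Longrightarrow> dv dvd b2 * c2 + b3 * c3 \<Longrightarrow> dv dvd c2^2 + c3^2 \<Longrightarrow> is_unit dv"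
    and nz: "b2^2 + b3^2 \<noteq> 0"
  shows "\<exists>r11 r12 r21 r22. r11^2 + r21^2 = 1 \<and> r12^2 + r22^2 = 1 \<and> r11 * r12 + r21 * r22 = 0 \<and>
     d2 = cst r11 * b2 + cst r21 * b3 \<and> d3 = cst r12 * b2 + cst r22 * b3 \<and>
     e2 = cst r11 * c2 + cst r21 * c3 \<and> e3 = cst r12 * c2 + cst r22 * c3"
proof -
  have "(b2^2 + b3^2) * (c2^2 + c3^2) = (b2 * c2 + b3 * c3)^2 + (b2 * c3 - b3 * c2)^2"
    by (simp add: power2_eq_square algebra_simps)
  moreover have "(d2^2 + d3^2) * (e2^2 + e3^2) = (d2 * e2 + d3 * e3)^2 + (d2 * e3 - d3 * e2)^2"
    by (simp add: power2_eq_square algebra_simps)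
  ultimately have "(b2 * c3 - b3 * c2)^2 = (d2 * e3 - d3 * e2)^2" using E1 E2 E3 by simp
  then have "b2 * c3 - b3 * c2 = d2 * e3 - d3 * e2 \<or> b2 * c3 - b3 * c2 = - (d2 * e3 - d3 * e2)"
    by (simp add: power2_eq_iff)
  then show ?thesis
  proof
    assume "b2 * c3 - b3 * c2 = d2 * e3 - d3 * e2"
    then show ?thesis using inj_core_pos[OF hb E1 E2 E3 _ G nz] by blast
  next
    assume Nq: "b2 * c3 - b3 * c2 = - (d2 * e3 - d3 * e2)"
    have hb': "- d3 = L (- s3) (- t3)" using hb(4) by (simp add: L_def)
    obtain r11 r12 r21 r22 where r: "r11^2 + r21^2 = 1" "r12^2 + r22^2 = 1" "r11 * r12 + r21 * r22 = 0"
      "d2 = cst r11 * b2 + cst r21 * b3" "- d3 = cst r12 * b2 + cst r22 * b3"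
      "e2 = cst r11 * c2 + cst r21 * c3" "- e3 = cst r12 * c2 + cst r22 * c3"
      using inj_core_pos[OF hb(1,2,3) hb', of c2 c3 e2 "- e3"] E1 E2 E3 Nq G nz
      by (auto simp: algebra_simps)
    have "d3 = - (- d3)" by simp
    also have "\<dots> = - (cst r12 * b2 + cst r22 * b3)" by (simp only: r(5))
    also have "\<dots> = cst (- r12) * b2 + cst (- r22) * b3" by (simp add: cst_minus)
    finally have d3: "d3 = cst (- r12) * b2 + cst (- r22) * b3" .
    have "e3 = - (- e3)" by simp
    also have "\<dots> = - (cst r12 * c2 + cst r22 * c3)" by (simp only: r(7))
    also have "\<dots> = cst (- r12) * c2 + cst (- r22) * c3" by (simp add: cst_minus)
    finally have e3: "e3 = cst (- r12) * c2 + cst (- r22) * c3" .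
    show ?thesis
      by (rule exI[of _ r11], rule exI[of _ "- r12"], rule exI[of _ r21], rule exI[of _ "- r22"])
        (use r d3 e3 in \<open>auto simp: algebra_simps\<close>)
  qed
qed

lemma hom2_not_unit: "hom2 d p \<Longrightarrow> d > 0 \<Longrightarrow> \<not> is_unit p"
proof
  assume h: "hom2 d p" "d > 0" "is_unit p"
  then obtain c where c: "p = [:c:]" "is_unit c" by (auto simp: is_unit_poly_iff)
  then obtain c0 where "c = [:c0:]" "is_unit c0" by (auto simp: is_unit_poly_iff)
  then have "c = [:c0:]" "c0 \<noteq> 0" by auto
  with c have "coeff (coeff p 0) 0 \<noteq> 0" by simp
  then show False using hom2_zero[OF h(1), of 0 0] h(2) by auto
qed

lemma f3_nz:
  assumes "hom2 2 f2" "hom2 4 f4" "gcd f3 (4 * f4 - f2\<^sup>2) = 1"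
  shows "f3 \<noteq> 0"
proof
  assume "f3 = 0"
  then have "(4 * f4 - f2^2) dvd 1" using assms(3) by (metis dvd_0_right dvd_refl gcd_greatest)
  moreover have "hom2 4 (4 * f4 - f2^2)" using assms by (intro hom2_diff hom2_num hom2_sq2)
  ultimately show False using hom2_not_unit by fastforce
qed

lemma sumsq0: fixes a b :: "real poly poly" shows "a^2 + b^2 = 0 \<Longrightarrow> a = 0 \<and> b = 0"
  by (simp add: sum_power2_eq_zero_iff)



lemma orth_S:
  assumes "r11^2 + r21^2 = 1" "r12^2 + r22^2 = 1" "r11 * r12 + r21 * r22 = 0"
  shows "orthogonal_matrix (vector [vector [1,0,0], vector [0, r11, r12], vector [0, r21, r22]] :: real^3^3)"
  unfolding orthogonal_matrix
  using assms by (simp add: vec_eq_iff forall_3 matrix_matrix_mult_def sum_3 transpose_def mat_def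
      power2_eq_square algebra_simps)

lemma inj_norm:
  fixes q p :: "real poly poly poly ^ 3"
  assumes hf: "hom2 2 f2" "hom2 4 f4" and gcd: "gcd f3 (4 * f4 - f2\<^sup>2) = 1"
    and q: "q \<in> sos3_reps (quartic f2 f3 f4)" "normal q"
    and p: "p \<in> sos3_reps (quartic f2 f3 f4)" "normal p"
    and x: "xi q = xi p"
  shows "(q, p) \<in> orth_equiv"
proof -
  define c1 c2 c3 b2 b3 where "c1 = coeff (q$1) 0" "c2 = coeff (q$2) 0" "c3 = coeff (q$3) 0"
    "b2 = coeff (q$2) 1" "b3 = coeff (q$3) 1"
  note s = norm_struct[OF q, folded c1_c2_c3_b2_b3_def]
  define a1 e2 e3 d2 d3 where "a1 = coeff (p$1) 0" "e2 = coeff (p$2) 0" "e3 = coeff (p$3) 0"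
    "d2 = coeff (p$2) 1" "d3 = coeff (p$3) 1"
  note t = norm_struct[OF p, folded a1_e2_e3_d2_d3_def]
  have ca: "a1 = c1" using x s(12) t(12) by simp
  have E1: "b2^2 + b3^2 = d2^2 + d3^2" using s(9) t(9) ca by (simp add: add.assoc)
  have "2 * (b2 * c2 + b3 * c3) = 2 * (d2 * e2 + d3 * e3)" using s(10) t(10) by (simp add: algebra_simps)
  then have E2: "b2 * c2 + b3 * c3 = d2 * e2 + d3 * e3" by simp
  have E3: "c2^2 + c3^2 = e2^2 + e3^2" using s(11) t(11) ca by (simp add: add.assoc)
  have G: "is_unit dv" if "dv dvd b2^2 + b3^2" "dv dvd b2 * c2 + b3 * c3" "dv dvd c2^2 + c3^2" for dv
  proof -
    have "f3 = 2 * (b2 * c2 + b3 * c3)" using s(10) by (simp add: algebra_simps)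
    then have d1: "dv dvd f3" using that(2) by (metis dvd_mult)
    have "4 * f4 - f2^2 = 4 * (c2^2 + c3^2) - (4 * c1 + (b2^2 + b3^2)) * (b2^2 + b3^2)"
      unfolding s(9)[symmetric] s(11)[symmetric] by (simp add: power2_eq_square algebra_simps)
    then have d2: "dv dvd 4 * f4 - f2^2" using that(1,3) by (metis dvd_diff dvd_mult dvd_mult2)
    show ?thesis using gcd_greatest[OF d1 d2] gcd by simp
  qed
  have nz: "b2^2 + b3^2 \<noteq> 0"
  proof
    assume "b2^2 + b3^2 = 0"
    then have "b2 = 0" "b3 = 0" using sumsq0 by blast+
    then have "f3 = 0" using s(10) by simp
    then show False using f3_nz[OF hf gcd] by simp
  qed
  obtain r11 r12 r21 r22 where r: "r11^2 + r21^2 = 1" "r12^2 + r22^2 = 1" "r11 * r12 + r21 * r22 = 0"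
     "d2 = cst r11 * b2 + cst r21 * b3" "d3 = cst r12 * b2 + cst r22 * b3"
     "e2 = cst r11 * c2 + cst r21 * c3" "e3 = cst r12 * c2 + cst r22 * c3"
    using inj_core[OF hom2_1[OF s(7)] hom2_1[OF s(8)] hom2_1[OF t(7)] hom2_1[OF t(8)] E1 E2 E3 G nz]
    by blast
  define S :: "real^3^3" where "S = vector [vector [1,0,0], vector [0, r11, r12], vector [0, r21, r22]]"
  have "p = lin S q"
    unfolding vec_eq_iff forall_3 lin_def sum_3 S_def
    using s(1,2,3) t(1,2,3) r(4-7) ca by (simp add: K_def)
  then show ?thesis unfolding orth_equiv_iff using orth_S[OF r(1-3)] S_def by blast
qed



lemma map_poly_hom_add:
  assumes f0: "f 0 = 0" and fadd: "\<And>x y. f (x + y) = f x + f y"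
  shows "map_poly f (p + q) = map_poly f p + map_poly f q"
  by (intro poly_eqI) (simp add: coeff_map_poly f0 fadd)

lemma map_poly_hom_mult:
  fixes f :: "'a::comm_ring_1 \<Rightarrow> 'b::comm_ring_1"
  assumes f0: "f 0 = 0" and fadd: "\<And>x y. f (x + y) = f x + f y" and fmult: "\<And>x y. f (x * y) = f x * f y"
  shows "map_poly f (p * q) = map_poly f p * map_poly f q"
proof (induction p)
  case 0 then show ?case by simp
next
  case (pCons a p)
  have "map_poly f (pCons a p * q) = map_poly f (smult a q + pCons 0 (p * q))" by simp
  also have "\<dots> = smult (f a) (map_poly f q) + pCons 0 (map_poly f p * map_poly f q)"
    by (simp add: map_poly_hom_add[OF f0 fadd] map_poly_smult[OF f0 fmult] map_poly_pCons[of f, OF f0] pCons.IH f0)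
  also have "\<dots> = map_poly f (pCons a p) * map_poly f q"
    by (simp add: map_poly_pCons[of f, OF f0])
  finally show ?case .
qed

definition ev1 :: "real poly \<Rightarrow> complex" where "ev1 q = complex_of_real (poly q 1)"
definition ceval :: "real poly poly \<Rightarrow> complex \<Rightarrow> complex" where
  "ceval P z = poly (map_poly ev1 P) z"

lemma ev1_0: "ev1 0 = 0" by (simp add: ev1_def)
lemma ev1_add: "ev1 (x + y) = ev1 x + ev1 y" by (simp add: ev1_def)
lemma ev1_mult: "ev1 (x * y) = ev1 x * ev1 y" by (simp add: ev1_def)

lemma ceval_mult[simp]: "ceval (p * q) z = ceval p z * ceval q z"
  by (simp add: ceval_def map_poly_hom_mult[OF ev1_0 ev1_add ev1_mult])
lemma ceval_add[simp]: "ceval (p + q) z = ceval p z + ceval q z"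
  by (simp add: ceval_def map_poly_hom_add[OF ev1_0 ev1_add])
lemma ceval_0[simp]: "ceval 0 z = 0" by (simp add: ceval_def)
lemma ceval_minus[simp]: "ceval (- p) z = - ceval p z"
proof -
  have "ceval (- p) z + ceval p z = 0" by (simp flip: ceval_add)
  then show ?thesis by (simp add: eq_neg_iff_add_eq_0)
qed
lemma ceval_diff[simp]: "ceval (p - q) z = ceval p z - ceval q z"
  using ceval_add[of p "- q" z] by simp
lemma ceval_pow[simp]: "ceval (p ^ 2) z = ceval p z ^ 2"
  by (simp add: power2_eq_square)

lemma ceval_cst[simp]: "ceval (cst a) z = complex_of_real a"
  by (simp add: ceval_def cst_def ev1_def map_poly_pCons)
lemma ceval_L: "ceval (L u v) z = complex_of_real u * z + complex_of_real v"
  by (simp add: ceval_def L_def ev1_def map_poly_pCons)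
lemma ceval_Q: "ceval (Q a b c) z = complex_of_real a * z^2 + complex_of_real b * z + complex_of_real c"
  by (simp add: ceval_def Q_def ev1_def map_poly_pCons power2_eq_square algebra_simps)
lemma ceval_C4r: "ceval (C4 0 0 0 r1 r0) z = complex_of_real r1 * z + complex_of_real r0"
  by (simp add: ceval_def C4_def ev1_def map_poly_pCons)

lemma C4_add: "C4 a b c d e + C4 a1 b1 c1 d1 e1 = C4 (a + a1) (b + b1) (c + c1) (d + d1) (e + e1)"
  by (simp add: C4_def)

lemma div_quad:
  assumes a: "a \<noteq> 0" and X: "hom2 4 X" and r: "Im r \<noteq> 0"
    and z: "ceval X r = 0" and gz: "ceval (Q a b c) r = 0"
  shows "\<exists>C. hom2 2 C \<and> X = Q a b c * C"
proof -
  obtain p0 p1 p2 p3 p4 where Xe: "X = C4 p0 p1 p2 p3 p4" using hom2_4[OF X] by blast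
  define \<alpha> where "\<alpha> = p0 / a"
  define \<beta> where "\<beta> = (p1 - b * \<alpha>) / a"
  define \<gamma> where "\<gamma> = (p2 - b * \<beta> - c * \<alpha>) / a"
  define \<rho>1 where "\<rho>1 = p3 - b * \<gamma> - c * \<beta>"
  define \<rho>0 where "\<rho>0 = p4 - c * \<gamma>"
  have e: "X = Q a b c * Q \<alpha> \<beta> \<gamma> + C4 0 0 0 \<rho>1 \<rho>0"
    unfolding Xe Q_mult_Q C4_add using a
    by (simp add: \<alpha>_def \<beta>_def \<gamma>_def \<rho>1_def \<rho>0_def field_simps)
  have "0 = complex_of_real \<rho>1 * r + complex_of_real \<rho>0"
    using z gz unfolding e by (simp add: ceval_C4r)
  then have "Im (complex_of_real \<rho>1 * r + complex_of_real \<rho>0) = 0" by simp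
  then have "\<rho>1 = 0" using r by simp
  with \<open>0 = complex_of_real \<rho>1 * r + complex_of_real \<rho>0\<close> have "\<rho>0 = 0" by simp
  then have "X = Q a b c * Q \<alpha> \<beta> \<gamma>" using e \<open>\<rho>1 = 0\<close> by (simp add: C4_def)
  then show ?thesis using hom2_Q by blast
qed



lemma eval2_L: "eval2 (L u v) x y = u * x + v * y"
  by (simp add: eval2_def L_def)
lemma eval2_C3: "eval2 (C3 m0 m1 m2 m3) x y = m0 * x^3 + m1 * x^2 * y + m2 * x * y^2 + m3 * y^3"
  by (simp add: eval2_def C3_def power2_eq_square power3_eq_cube algebra_simps)
lemma eval2_Q: "eval2 (Q a b c) x y = a * x^2 + b * x * y + c * y^2"
  by (simp add: eval2_def Q_def power2_eq_square algebra_simps)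

lemma div_lin:
  assumes pq: "p \<noteq> 0 \<or> q0 \<noteq> 0" and hm: "hom2 3 m" and z: "eval2 m (- q0) p = 0"
  shows "\<exists>M. hom2 2 M \<and> m = L p q0 * M"
proof -
  obtain m0 m1 m2 m3 where me: "m = C3 m0 m1 m2 m3" using hom2_3[OF hm] by blast
  have z': "- m0 * q0^3 + m1 * q0^2 * p - m2 * q0 * p^2 + m3 * p^3 = 0"
    using z unfolding me eval2_C3 by (simp add: power2_eq_square power3_eq_cube algebra_simps)
  show ?thesis
  proof (cases "p = 0")
    case True
    with pq have q: "q0 \<noteq> 0" by simp
    from z' True have "m0 = 0" using q by simp
    then have "m = L p q0 * Q (m1 / q0) (m2 / q0) (m3 / q0)"
      unfolding me L_mult_Q using True q by simp
    then show ?thesis using hom2_Q by blast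
  next
    case False
    define \<alpha> where "\<alpha> = m0 / p"
    define \<beta> where "\<beta> = (m1 - q0 * \<alpha>) / p"
    define \<gamma> where "\<gamma> = (m2 - q0 * \<beta>) / p"
    have g3: "q0 * \<gamma> = m3"
    proof -
      have "p^3 * (q0 * \<gamma>) = m0 * q0^3 - m1 * q0^2 * p + m2 * q0 * p^2"
        using False by (simp add: \<alpha>_def \<beta>_def \<gamma>_def power2_eq_square power3_eq_cube field_simps)
      also have "\<dots> = p^3 * m3" using z' by (simp add: algebra_simps)
      finally show ?thesis using False by simp
    qed
    have "m = L p q0 * Q \<alpha> \<beta> \<gamma>"
      unfolding me L_mult_Q using False g3
      by (simp add: \<alpha>_def \<beta>_def \<gamma>_def field_simps)
    then show ?thesis using hom2_Q by blast
  qed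
qed

lemma hom2_L1: "hom2 (Suc 0) (L u v)" using hom2_L[of u v] by simp
lemma hom2_zero_poly: "hom2 d 0" by (simp add: hom2_def)
lemma L_mult_C3: "L u v * C3 m0 m1 m2 m3 = C4 (u * m0) (u * m1 + v * m0) (u * m2 + v * m1) (u * m3 + v * m2) (v * m3)"
  by (simp add: L_def C3_def C4_def algebra_simps)
lemma hom2_m13: "hom2 1 p \<Longrightarrow> hom2 3 q \<Longrightarrow> hom2 4 (p * q)"
  by (metis hom2_1 hom2_3 L_mult_C3 hom2_C4)

lemma surj_core:
  fixes g m n K :: "real poly poly"
  assumes g: "g = Q a b c" "0 \<le> a" "0 \<le> c" "b^2 \<le> 4 * a * c" and gnz: "g \<noteq> 0"
    and hm: "hom2 3 m" "hom2 3 n" and eq: "g * K = m^2 + n^2"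
  shows "\<exists>b2 b3 c2 c3. hom2 1 b2 \<and> hom2 1 b3 \<and> hom2 2 c2 \<and> hom2 2 c3 \<and>
           b2^2 + b3^2 = g \<and> b2 * c2 + b3 * c3 = m \<and> c2^2 + c3^2 = K"
proof (cases "b^2 = 4 * a * c")
  case True
  obtain p q0 where pq: "p * p = a" "q0 * q0 = c" "p * q0 + q0 * p = b"
  proof (cases "a = 0")
    case True
    with \<open>b^2 = 4 * a * c\<close> have "b = 0" by simp
    show ?thesis by (rule that[of 0 "sqrt c"]) (use g(3) True \<open>b = 0\<close> in auto)
  next
    case False
    with g(2) have ap: "a > 0" by simp
    show ?thesis
    proof (rule that[of "sqrt a" "b / (2 * sqrt a)"])
      show "sqrt a * sqrt a = a" using ap by simp
      show "sqrt a * (b / (2 * sqrt a)) + b / (2 * sqrt a) * sqrt a = b" using ap by simp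
      have "b / (2 * sqrt a) * (b / (2 * sqrt a)) = b^2 / (4 * a)"
        using ap by (simp add: power2_eq_square)
      also have "\<dots> = c" using \<open>b^2 = 4 * a * c\<close> ap by simp
      finally show "b / (2 * sqrt a) * (b / (2 * sqrt a)) = c" .
    qed
  qed
  define l where "l = L p q0"
  have gl: "g = l^2" unfolding g(1) l_def power2_eq_square L_mult_L pq ..
  have lnz: "l \<noteq> 0" using gnz gl by auto
  have pqn: "p \<noteq> 0 \<or> q0 \<noteq> 0" using lnz by (auto simp: l_def L_def)
  have el: "eval2 l (- q0) p = 0" by (simp add: l_def eval2_L)
  have "eval2 (m^2 + n^2) (- q0) p = 0" unfolding eq[symmetric] gl by (simp add: el)
  then have "(eval2 m (- q0) p)^2 + (eval2 n (- q0) p)^2 = 0" by simp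
  then have zm: "eval2 m (- q0) p = 0" and zn: "eval2 n (- q0) p = 0"
    by (simp_all add: sum_power2_eq_zero_iff)
  obtain M where M: "hom2 2 M" "m = l * M" using div_lin[OF pqn hm(1) zm] l_def by blast
  obtain N where N: "hom2 2 N" "n = l * N" using div_lin[OF pqn hm(2) zn] l_def by blast
  have "l^2 * (M^2 + N^2) = l^2 * K"
    using eq unfolding gl M(2) N(2) by (simp add: power2_eq_square algebra_simps)
  then have MN: "M^2 + N^2 = K" using lnz by simp
  have hl: "hom2 1 l" unfolding l_def by (rule hom2_L)
  show ?thesis
    by (rule exI[of _ l], rule exI[of _ 0], rule exI[of _ M], rule exI[of _ N])
      (use M N MN gl hl hom2_zero_poly in simp)
next
  case False
  with g(4) have lt: "b^2 < 4 * a * c" by simp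
  have ap: "a > 0"
  proof (rule ccontr)
    assume "\<not> a > 0" then have "a = 0" using g(2) by simp
    then show False using lt by simp
  qed
  define sa \<beta> s where "sa = sqrt a" "\<beta> = b / (2 * sqrt a)" "s = sqrt (c - b^2 / (4 * a))"
  have sap: "sa > 0" using ap by (simp add: sa_\<beta>_s_def)
  have cpos: "c - b^2 / (4 * a) > 0" using lt ap by (simp add: field_simps)
  have sp: "s > 0" using cpos by (simp add: sa_\<beta>_s_def)
  define b2 b3 where "b2 = L sa \<beta>" "b3 = L 0 s"
  have gb: "b2^2 + b3^2 = g"
  proof -
    have "b2^2 + b3^2 = Q (sa * sa) (sa * \<beta> + \<beta> * sa) (\<beta> * \<beta> + s * s)"
      unfolding b2_b3_def power2_eq_square L_mult_L Q_add by simp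
    also have "sa * sa = a" using ap by (simp add: sa_\<beta>_s_def)
    also have "sa * \<beta> + \<beta> * sa = b" using ap by (simp add: sa_\<beta>_s_def)
    also have "\<beta> * \<beta> + s * s = c"
      using ap cpos by (simp add: sa_\<beta>_s_def power2_eq_square[symmetric] power_divide)
    finally show ?thesis using g(1) by simp
  qed
  define r where "r = - (complex_of_real \<beta> + \<i> * complex_of_real s) / complex_of_real sa"
  have Imr: "Im r \<noteq> 0" using sp sap by (simp add: r_def Im_divide)
  have cb2: "ceval b2 r = - \<i> * complex_of_real s"
    using sap by (simp add: b2_b3_def ceval_L r_def field_simps)
  have cb3: "ceval b3 r = complex_of_real s" by (simp add: b2_b3_def ceval_L)
  have cg: "ceval g r = 0" unfolding gb[symmetric] by (simp add: cb2 cb3 power_mult_distrib)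
  define Mc Nc where "Mc = ceval m r" "Nc = ceval n r"
  have "Mc^2 + Nc^2 = 0" using arg_cong[OF eq, of "\<lambda>P. ceval P r"] cg by (simp add: Mc_Nc_def)
  then have "(Nc - \<i> * Mc) * (Nc + \<i> * Mc) = 0" by (simp add: power2_eq_square algebra_simps)
  then have "Nc = \<i> * Mc \<or> Nc = - \<i> * Mc" by (auto simp: eq_neg_iff_add_eq_0)
  then obtain \<sigma> :: real where \<sigma>: "\<sigma>^2 = 1" "complex_of_real \<sigma> * Nc = - \<i> * Mc"
    by (metis (no_types) mult_minus_left mult_1 of_real_1 of_real_minus power2_minus
        mult.assoc complex_i_mult_minus one_power2 mult_minus1)
  define n' where "n' = cst \<sigma> * n"
  have n'sq: "n'^2 = n^2"
  proof -
    have "n'^2 = cst (\<sigma>^2) * n^2" by (simp add: n'_def power2_eq_square cst_mult mult_ac)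
    then show ?thesis using \<sigma>(1) by simp
  qed
  have cn': "ceval n' r = - \<i> * Mc" using \<sigma>(2) by (simp add: n'_def Mc_Nc_def)
  define X Y where "X = b2 * m - b3 * n'" "Y = b3 * m + b2 * n'"
  have cX: "ceval X r = 0"
    by (simp add: X_Y_def cb2 cb3 cn' Mc_Nc_def[symmetric] algebra_simps)
  have cY: "ceval Y r = 0"
    by (simp add: X_Y_def cb2 cb3 cn' Mc_Nc_def[symmetric] algebra_simps)
  have hn': "hom2 3 n'" unfolding n'_def using hm(2) by (rule hom2_cmult)
  have hX: "hom2 4 X" unfolding X_Y_def b2_b3_def
    by (intro hom2_diff; rule hom2_m13) (auto simp: hom2_L hom2_L1 hm hn')
  have hY: "hom2 4 Y" unfolding X_Y_def b2_b3_def
    by (intro hom2_add; rule hom2_m13) (auto simp: hom2_L hom2_L1 hm hn')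
  have gQ: "ceval (Q a b c) r = 0" using cg g(1) by simp
  obtain CX where CX: "hom2 2 CX" "X = Q a b c * CX" using div_quad[OF _ hX Imr cX gQ] ap by auto
  obtain CY where CY: "hom2 2 CY" "Y = Q a b c * CY" using div_quad[OF _ hY Imr cY gQ] ap by auto
  have gnz': "b2^2 + b3^2 \<noteq> 0" using gb gnz by simp
  have "(b2^2 + b3^2) * (b2 * CX + b3 * CY) = b2 * X + b3 * Y"
    unfolding CX(2) CY(2) gb g(1)[symmetric] by (simp add: algebra_simps)
  also have "\<dots> = (b2^2 + b3^2) * m" by (simp add: X_Y_def power2_eq_square algebra_simps)
  finally have e1: "b2 * CX + b3 * CY = m" using gnz' mult_left_cancel by blast
  have "g * (g * (CX^2 + CY^2)) = X^2 + Y^2"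
    unfolding CX(2) CY(2) g(1)[symmetric] by (simp add: power2_eq_square algebra_simps)
  also have "\<dots> = (b2^2 + b3^2) * (m^2 + n'^2)" by (simp add: X_Y_def power2_eq_square algebra_simps)
  also have "\<dots> = g * (g * K)" by (simp add: gb n'sq eq)
  finally have e2: "CX^2 + CY^2 = K" using gnz by simp
  have hb: "hom2 1 b2" "hom2 1 b3" unfolding b2_b3_def by (rule hom2_L)+
  show ?thesis using hb CX(1) CY(1) gb e1 e2 by blast
qed



lemma hom2_one: "hom2 0 1" by (metis cst_1 hom2_cst)

lemma psd_Q:
  assumes "psd2 (Q a b c)"
  shows "0 \<le> a" "0 \<le> c" "b^2 \<le> 4 * a * c"
proof -
  have ev: "\<And>x y. 0 \<le> a * x^2 + b * x * y + c * y^2" using assms by (simp add: psd2_def eval2_Q)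
  show a: "0 \<le> a" using ev[of 1 0] by simp
  show "0 \<le> c" using ev[of 0 1] by simp
  show "b^2 \<le> 4 * a * c"
  proof (cases "a = 0")
    case True
    have "b = 0"
    proof (rule ccontr)
      assume "b \<noteq> 0"
      have "0 \<le> b * (- (c + 1) / b) + c" using ev[of "- (c + 1) / b" 1] True by simp
      then show False using \<open>b \<noteq> 0\<close> by simp
    qed
    then show ?thesis using True by simp
  next
    case False
    with a have ap: "a > 0" by simp
    have "0 \<le> a * (- b)^2 + b * (- b) * (2 * a) + c * (2 * a)^2" using ev by blast
    also have "\<dots> = a * (4 * a * c - b^2)" by (simp add: power2_eq_square algebra_simps)
    finally have "0 \<le> 4 * a * c - b^2" using ap by (simp add: zero_le_mult_iff)
    then show ?thesis by simp
  qed
qed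

lemma surj_rep:
  assumes hf: "hom2 2 f2" "hom2 3 f3" "hom2 4 f4" and gcd: "gcd f3 (4 * f4 - f2\<^sup>2) = 1"
    and x: "\<xi> \<in> Tset f2 f3 f4"
  shows "\<exists>q. q \<in> sos3_reps (quartic f2 f3 f4) \<and> normal q \<and> xi q = \<xi>"
proof -
  obtain \<eta> where hx: "hom2 2 \<xi>" and he: "hom2 3 \<eta>" and eq: "\<eta>^2 + f3^2 = (f2 - \<xi>) * (4 * f4 - \<xi>^2)"
    and ps: "psd2 (f2 - \<xi>)"
    using x unfolding Tset_def by blast
  define g where "g = f2 - \<xi>"
  have hg: "hom2 2 g" unfolding g_def using hf(1) hx by (rule hom2_diff)
  obtain a b c where gQ: "g = Q a b c" using hom2_2[OF hg] by blast
  have abc: "0 \<le> a" "0 \<le> c" "b^2 \<le> 4 * a * c" using psd_Q ps unfolding g_def[symmetric] gQ by auto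
  have gnz: "g \<noteq> 0"
  proof
    assume "g = 0"
    then have "\<eta>^2 + f3^2 = 0" using eq by (simp add: g_def)
    then have "f3 = 0" using sumsq0 by blast
    then show False using f3_nz[OF hf(1,3) gcd] by simp
  qed
  define m n K where "m = cst (1/2) * f3" "n = cst (1/2) * \<eta>" "K = cst (1/4) * (4 * f4 - \<xi>^2)"
  have c14: "cst (1/4) = cst (1/2) * cst (1/2)" by (simp flip: cst_mult)
  have "m^2 + n^2 = cst (1/4) * (\<eta>^2 + f3^2)"
    by (simp add: m_n_K_def c14 power2_eq_square algebra_simps)
  also have "\<dots> = g * K" by (simp add: eq g_def m_n_K_def)
  finally have eqK: "g * K = m^2 + n^2" ..
  have hm: "hom2 3 m" "hom2 3 n" unfolding m_n_K_def using hf(2) he by (auto intro: hom2_cmult)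
  obtain b2 b3 c2 c3 where s: "hom2 1 b2" "hom2 1 b3" "hom2 2 c2" "hom2 2 c3"
    "b2^2 + b3^2 = g" "b2 * c2 + b3 * c3 = m" "c2^2 + c3^2 = K"
    using surj_core[OF gQ abc gnz hm eqK] by blast
  define c1 where "c1 = cst (1/2) * \<xi>"
  have two: "2 * c1 = \<xi>"
  proof -
    have "2 * c1 = cst (2 * (1/2)) * \<xi>" by (simp only: c1_def cst_mult cst_numeral mult.assoc)
    then show ?thesis by simp
  qed
  define q :: "real poly poly poly ^ 3" where "q = vector [[:c1, 0, 1:], [:c2, b2, 0:], [:c3, b3, 0:]]"
  have hq: "hom3 2 (q$i)" for i
  proof -
    have "hom3 2 [:c1, 0, 1:]" using hx by (intro hom3_2I) (auto simp: c1_def hom2_cmult hom2_zero_poly hom2_one)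
    moreover have "hom3 2 [:c2, b2, 0:]" using s by (intro hom3_2I) (auto simp: hom2_zero_poly)
    moreover have "hom3 2 [:c3, b3, 0:]" using s by (intro hom3_2I) (auto simp: hom2_zero_poly)
    ultimately show ?thesis using exhaust_3[of i] unfolding q_def by auto
  qed
  have f2e: "f2 = 2 * c1 + (b2^2 + b3^2)" using s(5) two by (simp add: g_def)
  have f3e: "f3 = 2 * (b2 * c2 + b3 * c3)"
  proof -
    have "2 * m = cst (2 * (1/2)) * f3" by (simp only: m_n_K_def cst_mult cst_numeral mult.assoc)
    then show ?thesis using s(6) by simp
  qed
  have f4e: "f4 = c1^2 + (c2^2 + c3^2)"
  proof -
    have "c1^2 + K = cst (1/4) * \<xi>^2 + cst (1/4) * (4 * f4 - \<xi>^2)"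
      by (simp add: c1_def m_n_K_def c14 power2_eq_square algebra_simps)
    also have "\<dots> = (cst (1/4) * 4) * f4" by (simp add: algebra_simps)
    also have "cst (1/4) * 4 = cst (1/4) * cst 4" by (simp only: cst_numeral)
    also have "\<dots> = cst (1/4 * 4)" by (simp only: cst_mult)
    finally show ?thesis using s(7) by simp
  qed
  have "(\<Sum>i\<in>UNIV. (q$i)^2) = [:c1, 0, 1:]^2 + [:c2, b2, 0:]^2 + [:c3, b3, 0:]^2"
    by (simp add: q_def sum_3)
  also have "\<dots> = quartic f2 f3 f4"
    unfolding sq3 quartic_def f2e f3e f4e by (simp add: algebra_simps power2_eq_square)
  finally have "q \<in> sos3_reps (quartic f2 f3 f4)" using hq by (simp add: sos3_reps_def)
  moreover have "normal q" by (simp add: normal_def q_def numeral_2_eq_2)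
  moreover have "xi q = \<xi>" by (simp add: xi_def q_def sum_3 two numeral_2_eq_2)
  ultimately show ?thesis by blast
qed



lemma equiv_orth: "equiv UNIV orth_equiv"
  by (rule equivI) (auto simp: refl_on_def sym_def trans_def intro: orth_refl orth_sym orth_trans)

theorem corollary3p9:
  fixes f2 f3 f4 :: "real poly poly"
  assumes "hom2 2 f2" and "hom2 3 f3" and "hom2 4 f4"
    and "gcd f3 (4 * f4 - f2\<^sup>2) = 1"
  shows "(sos3_reps (quartic f2 f3 f4) // orth_equiv) \<approx>
    {\<xi>. hom2 2 \<xi> \<and> (\<exists>\<eta>. hom2 3 \<eta> \<and>
         \<eta>\<^sup>2 + f3\<^sup>2 = (f2 - \<xi>) * (4 * f4 - \<xi>\<^sup>2) \<and>
         psd2 (f2 - \<xi>) \<and> psd2 (4 * f4 - \<xi>\<^sup>2))}"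
proof -
  define R where "R = sos3_reps (quartic f2 f3 f4)"
  define \<Phi> where "\<Phi> X = xi (SOME p. p \<in> X)" for X :: "(real poly poly poly ^ 3) set"
  have cls: "\<Phi> (orth_equiv `` {p}) = xi p" for p
  proof -
    have "p \<in> orth_equiv `` {p}" using orth_refl by auto
    then have "(SOME q. q \<in> orth_equiv `` {p}) \<in> orth_equiv `` {p}" by (rule someI)
    then show ?thesis unfolding \<Phi>_def using xi_orth by auto
  qed
  have inT: "xi p \<in> Tset f2 f3 f4" if pR: "p \<in> R" for p
  proof -
    obtain q where q: "q \<in> R" "(p, q) \<in> orth_equiv" "normal q"
      using normalize[OF pR[unfolded R_def]] unfolding R_def normal_def by blast
    have "xi q \<in> Tset f2 f3 f4" using norm_in_T q unfolding R_def by blast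
    then show ?thesis using xi_orth[OF q(2)] by simp
  qed
  have same: "(p, p') \<in> orth_equiv" if pp: "p \<in> R" "p' \<in> R" "xi p = xi p'" for p p'
  proof -
    obtain q where q: "q \<in> R" "(p, q) \<in> orth_equiv" "normal q"
      using normalize[OF pp(1)[unfolded R_def]] unfolding R_def normal_def by blast
    obtain q' where q': "q' \<in> R" "(p', q') \<in> orth_equiv" "normal q'"
      using normalize[OF pp(2)[unfolded R_def]] unfolding R_def normal_def by blast
    have "xi q = xi q'" using xi_orth[OF q(2)] xi_orth[OF q'(2)] pp(3) by simp
    then have "(q, q') \<in> orth_equiv"
      using inj_norm[OF assms(1,3,4)] q q' unfolding R_def by blast
    then show ?thesis using q(2) q'(2) orth_sym orth_trans by blast
  qed
  have "bij_betw \<Phi> (R // orth_equiv) (Tset f2 f3 f4)"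
  proof (rule bij_betw_imageI)
    show "inj_on \<Phi> (R // orth_equiv)"
    proof (rule inj_onI)
      fix X Y assume X: "X \<in> R // orth_equiv" and Y: "Y \<in> R // orth_equiv" and e: "\<Phi> X = \<Phi> Y"
      obtain p where p: "p \<in> R" "X = orth_equiv `` {p}" using X by (auto elim: quotientE)
      obtain p' where p': "p' \<in> R" "Y = orth_equiv `` {p'}" using Y by (auto elim: quotientE)
      have "xi p = xi p'" using e p p' cls by simp
      then have "(p, p') \<in> orth_equiv" using same p p' by blast
      then show "X = Y" using p p' equiv_class_eq[OF equiv_orth] by simp
    qed
    show "\<Phi> ` (R // orth_equiv) = Tset f2 f3 f4"
    proof
      show "\<Phi> ` (R // orth_equiv) \<subseteq> Tset f2 f3 f4"
        using cls inT by (auto elim!: quotientE)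
      show "Tset f2 f3 f4 \<subseteq> \<Phi> ` (R // orth_equiv)"
      proof
        fix \<xi> assume "\<xi> \<in> Tset f2 f3 f4"
        then obtain q where q: "q \<in> R" "xi q = \<xi>" using surj_rep[OF assms] unfolding R_def by blast
        from q(1) have "orth_equiv `` {q} \<in> R // orth_equiv" by (rule quotientI)
        then show "\<xi> \<in> \<Phi> ` (R // orth_equiv)" using cls[of q] q(2) by (metis image_eqI)
      qed
    qed
  qed
  then show ?thesis unfolding eqpoll_def R_def Tset_def by blast
qed

end
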